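(* Let $Q$ be a prime quiver with $\chi(Q)\ge2$ such that $(Q,0)$ is tight. (i) For every vertex $v\in Q_0$ we have $|\{a\in Q_1\mid a^-=v\}|\ge2$ and $|\{a\in Q_1\mid a^+=v\}|\ge2$. (ii) $|Q_0|\le\chi(Q)-1$, and consequently $|Q_1|=|Q_0|+\chi(Q)-1\le2(\chi(Q)-1)$.
   Context: A quiver $Q$: vertices $Q_0$, arrows $Q_1$, $a$ from $a^-$ to $a^+$ (loops, multiple arrows, oriented cycles allowed). $\chi(Q)=|Q_1|-|Q_0|+(\text{number of connected components of the underlying graph})$. $Q$ is prime if its underlying graph is connected, has at least one edge, and is not the union of two full proper subgraphs having exactly one common vertex. For $\theta\in\mathbb{Z}^{Q_0}$, $\nabla(Q,\theta)=\{x\in\mathbb{R}_{\ge0}^{Q_1}\mid\forall v:\ \theta(v)=\sum_{a^+=v}x(a)-\sum_{a^-=v}x(a)\}$. Integral-affine equivalence of lattice polyhedra: an affine isomorphism of affine spans mapping lattice points of the span onto lattice points of the span and the polyhedron onto the polyhedron. An arrow $a$ is removable if $\nabla(Q,\theta)$ is integral-affinely equivalent to $\nabla(Q',\theta)$, $Q'$ being $Q$ with $a$ deleted; contracting a non-loop arrow $a$ gives $(\hat Q,\hat\theta)$ (delete $a$, glue $a^\pm$ into one vertex $v$, $\hat\theta(v)=\theta(a^-)+\theta(a^+)$, $\hat\theta=\theta$ elsewhere), and $a$ is contractable if $\nabla(Q,\theta)$ is integral-affinely equivalent to $\nabla(\hat Q,\hat\theta)$. $(Q,\theta)$ is tight if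 no arrow is removable or contractable. *)

theory Defs
  imports "HOL-Analysis.Analysis"
begin

text \<open>A quiver is given by a vertex set V, an arrow set A, and source/target maps
  s (a^-) and t (a^+). Vectors in R^{Q_1} are functions 'a \<Rightarrow> real vanishing off A.\<close>

definition quiver :: "'v set \<Rightarrow> 'a set \<Rightarrow> ('a \<Rightarrow> 'v) \<Rightarrow> ('a \<Rightarrow> 'v) \<Rightarrow> bool" where
  "quiver V A s t \<longleftrightarrow> finite V \<and> finite A \<and> s ` A \<subseteq> V \<and> t ` A \<subseteq> V"

definition flow_polytope ::
  "'v set \<Rightarrow> 'a set \<Rightarrow> ('a \<Rightarrow> 'v) \<Rightarrow> ('a \<Rightarrow> 'v) \<Rightarrow> ('v \<Rightarrow> int) \<Rightarrow> ('a \<Rightarrow> real) set" where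
  "flow_polytope V A s t \<theta> =
     {x. (\<forall>a. a \<notin> A \<longrightarrow> x a = 0) \<and> (\<forall>a\<in>A. x a \<ge> 0) \<and>
         (\<forall>v\<in>V. real_of_int (\<theta> v) =
             (\<Sum>a\<in>{a\<in>A. t a = v}. x a) - (\<Sum>a\<in>{a\<in>A. s a = v}. x a))}"

definition aff_hull :: "('a \<Rightarrow> real) set \<Rightarrow> ('a \<Rightarrow> real) set" where
  "aff_hull S = {x. \<exists>F u. finite F \<and> F \<subseteq> S \<and> F \<noteq> {} \<and> sum u F = 1 \<and>
                       x = (\<lambda>i. \<Sum>y\<in>F. u y * y i)}"

definition int_points :: "'a set \<Rightarrow> ('a \<Rightarrow> real) set" where
  "int_points A = {x. \<forall>a\<in>A. x a \<in> \<int>}"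

definition int_aff_equiv ::
  "'a set \<Rightarrow> ('a \<Rightarrow> real) set \<Rightarrow> 'a set \<Rightarrow> ('a \<Rightarrow> real) set \<Rightarrow> bool" where
  "int_aff_equiv A P A' P' \<longleftrightarrow>
     (\<exists>f. bij_betw f (aff_hull P) (aff_hull P') \<and>
          (\<forall>x\<in>aff_hull P. \<forall>y\<in>aff_hull P. \<forall>c::real.
              f (\<lambda>i. (1 - c) * x i + c * y i) = (\<lambda>i. (1 - c) * f x i + c * f y i)) \<and>
          f ` (aff_hull P \<inter> int_points A) = aff_hull P' \<inter> int_points A' \<and>
          f ` P = P')"

definition removable ::
  "'v set \<Rightarrow> 'a set \<Rightarrow> ('a \<Rightarrow> 'v) \<Rightarrow> ('a \<Rightarrow> 'v) \<Rightarrow> ('v \<Rightarrow> int) \<Rightarrow> 'a \<Rightarrow> bool" where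
  "removable V A s t \<theta> a \<longleftrightarrow>
     int_aff_equiv A (flow_polytope V A s t \<theta>) (A - {a}) (flow_polytope V (A - {a}) s t \<theta>)"

text \<open>Contraction of a non-loop arrow a: the target t a is glued onto the source s a
  (the glued vertex is represented by s a).\<close>
definition glue :: "('a \<Rightarrow> 'v) \<Rightarrow> ('a \<Rightarrow> 'v) \<Rightarrow> 'a \<Rightarrow> 'v \<Rightarrow> 'v" where
  "glue s t a w = (if w = t a then s a else w)"

definition contract_theta ::
  "('a \<Rightarrow> 'v) \<Rightarrow> ('a \<Rightarrow> 'v) \<Rightarrow> ('v \<Rightarrow> int) \<Rightarrow> 'a \<Rightarrow> 'v \<Rightarrow> int" where
  "contract_theta s t \<theta> a w = (if w = s a then \<theta> (s a) + \<theta> (t a) else \<theta> w)"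

definition contractable ::
  "'v set \<Rightarrow> 'a set \<Rightarrow> ('a \<Rightarrow> 'v) \<Rightarrow> ('a \<Rightarrow> 'v) \<Rightarrow> ('v \<Rightarrow> int) \<Rightarrow> 'a \<Rightarrow> bool" where
  "contractable V A s t \<theta> a \<longleftrightarrow> s a \<noteq> t a \<and>
     int_aff_equiv A (flow_polytope V A s t \<theta>)
       (A - {a}) (flow_polytope (V - {t a}) (A - {a}) (glue s t a \<circ> s) (glue s t a \<circ> t)
                    (contract_theta s t \<theta> a))"

definition tight :: "'v set \<Rightarrow> 'a set \<Rightarrow> ('a \<Rightarrow> 'v) \<Rightarrow> ('a \<Rightarrow> 'v) \<Rightarrow> ('v \<Rightarrow> int) \<Rightarrow> bool" where
  "tight V A s t \<theta> \<longleftrightarrow> (\<forall>a\<in>A. \<not> removable V A s t \<theta> a \<and> \<not> contractable V A s t \<theta> a)"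

definition und_edges :: "'a set \<Rightarrow> ('a \<Rightarrow> 'v) \<Rightarrow> ('a \<Rightarrow> 'v) \<Rightarrow> ('v \<times> 'v) set" where
  "und_edges A s t = {(s a, t a) | a. a \<in> A} \<union> {(t a, s a) | a. a \<in> A}"

definition conn_rel :: "'v set \<Rightarrow> 'a set \<Rightarrow> ('a \<Rightarrow> 'v) \<Rightarrow> ('a \<Rightarrow> 'v) \<Rightarrow> ('v \<times> 'v) set" where
  "conn_rel V A s t = {(u, w). u \<in> V \<and> w \<in> V \<and> (u, w) \<in> (und_edges A s t)\<^sup>*}"

definition num_components :: "'v set \<Rightarrow> 'a set \<Rightarrow> ('a \<Rightarrow> 'v) \<Rightarrow> ('a \<Rightarrow> 'v) \<Rightarrow> nat" where
  "num_components V A s t = card (V // conn_rel V A s t)"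

definition chi :: "'v set \<Rightarrow> 'a set \<Rightarrow> ('a \<Rightarrow> 'v) \<Rightarrow> ('a \<Rightarrow> 'v) \<Rightarrow> int" where
  "chi V A s t = int (card A) - int (card V) + int (num_components V A s t)"

definition prime_quiver :: "'v set \<Rightarrow> 'a set \<Rightarrow> ('a \<Rightarrow> 'v) \<Rightarrow> ('a \<Rightarrow> 'v) \<Rightarrow> bool" where
  "prime_quiver V A s t \<longleftrightarrow>
     num_components V A s t = 1 \<and> A \<noteq> {} \<and>
     \<not> (\<exists>V1 V2. V1 \<subset> V \<and> V2 \<subset> V \<and> V1 \<union> V2 = V \<and> card (V1 \<inter> V2) = 1 \<and>
              (\<forall>a\<in>A. (s a \<in> V1 \<and> t a \<in> V1) \<or> (s a \<in> V2 \<and> t a \<in> V2)))"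

end

theory Submission imports Defs begin

definition lin :: "(('a \<Rightarrow> real) \<Rightarrow> ('a \<Rightarrow> real)) \<Rightarrow> bool" where
  "lin f \<longleftrightarrow> (\<forall>(F::('a\<Rightarrow>real) set) u h. f (\<lambda>i. \<Sum>y\<in>F. u y * h y i) = (\<lambda>i. \<Sum>y\<in>F. u y * f (h y) i))"

lemma lin2:
  assumes "lin f"
  shows "f (\<lambda>i. (1 - c) * x i + c * y i) = (\<lambda>i. (1 - c) * f x i + c * f y i)"
proof (cases "x = y")
  case True
  have "f (\<lambda>i. \<Sum>z\<in>{x}. 1 * z i) = (\<lambda>i. \<Sum>z\<in>{x}. 1 * f z i)"
    using assms[unfolded lin_def, rule_format, where F="{x}" and u="\<lambda>_. 1" and h=id] by simp
  then show ?thesis using True by (simp add: algebra_simps)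
next
  case False
  define u where "u = (\<lambda>z. if z = x then 1 - c else c)"
  have "f (\<lambda>i. \<Sum>z\<in>{x,y}. u z * id z i) = (\<lambda>i. \<Sum>z\<in>{x,y}. u z * f (id z) i)"
    using assms[unfolded lin_def, rule_format, where F="{x,y}" and u=u and h=id] by simp
  then show ?thesis using False by (simp add: u_def)
qed

lemma aff_img:
  assumes "lin f" "inj_on f P" "f ` P \<subseteq> P'"
  shows "f ` aff_hull P \<subseteq> aff_hull P'"
proof
  fix z assume "z \<in> f ` aff_hull P"
  then obtain x where x: "x \<in> aff_hull P" "z = f x" by blast
  then obtain F u where F: "finite F" "F \<subseteq> P" "F \<noteq> {}" "sum u F = 1"
     "x = (\<lambda>i. \<Sum>y\<in>F. u y * y i)" unfolding aff_hull_def by blast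
  have z: "z = (\<lambda>i. \<Sum>y\<in>F. u y * f y i)"
    using assms(1)[unfolded lin_def, rule_format, where F=F and u=u and h=id] x(2) F(5) by simp
  have inj: "inj_on f F" using assms(2) F(2) inj_on_subset by blast
  define u' where "u' = (\<lambda>w. u (inv_into F f w))"
  have "sum u' (f ` F) = sum (u' \<circ> f) F" using sum.reindex[OF inj] .
  also have "\<dots> = sum u F" by (rule sum.cong) (simp_all add: u'_def inv_into_f_f[OF inj])
  finally have s: "sum u' (f ` F) = 1" using F by simp
  have "(\<lambda>i. \<Sum>w\<in>f ` F. u' w * w i) = (\<lambda>i. \<Sum>y\<in>F. u y * f y i)"
  proof
    fix i show "(\<Sum>w\<in>f ` F. u' w * w i) = (\<Sum>y\<in>F. u y * f y i)"
    proof -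
      have "(\<Sum>w\<in>f ` F. u' w * w i) = (\<Sum>y\<in>F. u' (f y) * f y i)"
        by (simp add: sum.reindex[OF inj])
      also have "\<dots> = (\<Sum>y\<in>F. u y * f y i)"
        by (rule sum.cong) (simp_all add: u'_def inv_into_f_f[OF inj])
      finally show ?thesis .
    qed
  qed
  then have eq: "z = (\<lambda>i. \<Sum>w\<in>f ` F. u' w * w i)" using z by simp
  have sub: "f ` F \<subseteq> P'" using F(2) assms(3) by blast
  have fin: "finite (f ` F)" "f ` F \<noteq> {}" using F(1,3) by auto
  have "finite (f ` F) \<and> f ` F \<subseteq> P' \<and> f ` F \<noteq> {} \<and> sum u' (f ` F) = 1 \<and>
        z = (\<lambda>i. \<Sum>w\<in>f ` F. u' w * w i)" using sub fin s eq by simp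
  then show "z \<in> aff_hull P'" unfolding aff_hull_def by blast
qed

lemma aff_id:
  assumes "lin f" "lin g" "\<forall>x\<in>P. g (f x) = x" "x \<in> aff_hull P"
  shows "g (f x) = x"
proof -
  obtain F u where F: "finite F" "F \<subseteq> P" "F \<noteq> {}" "sum u F = 1"
     "x = (\<lambda>i. \<Sum>y\<in>F. u y * y i)" using assms(4) unfolding aff_hull_def by blast
  have "g (f x) = (\<lambda>i. \<Sum>y\<in>F. u y * g (f y) i)"
    using assms(1)[unfolded lin_def, rule_format, where F=F and u=u and h=id]
      assms(2)[unfolded lin_def, rule_format, where F=F and u=u and h=f] F(5) by simp
  also have "\<dots> = x"
  proof (subst F(5), rule ext, rule sum.cong[OF refl])
    fix i y assume "y \<in> F"
    then have "g (f y) = y" using F(2) assms(3) by blast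
    then show "u y * g (f y) i = u y * y i" by simp
  qed
  finally show ?thesis .
qed

lemma equiv_lemma:
  assumes lf: "lin f" and lg: "lin g"
    and "f ` P \<subseteq> P'" "g ` P' \<subseteq> P"
    and gf: "\<forall>x\<in>P. g (f x) = x" and fg: "\<forall>y\<in>P'. f (g y) = y"
    and fi: "\<forall>x. x \<in> int_points A \<longrightarrow> f x \<in> int_points A'"
    and gi: "\<forall>y. y \<in> int_points A' \<longrightarrow> g y \<in> int_points A"
  shows "int_aff_equiv A P A' P'"
proof -
  have injf: "inj_on f P" using gf by (intro inj_on_inverseI[of P g f]) auto
  have injg: "inj_on g P'" using fg by (intro inj_on_inverseI[of P' f g]) auto
  have i1: "f ` aff_hull P \<subseteq> aff_hull P'" using aff_img[OF lf injf assms(3)] .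
  have i2: "g ` aff_hull P' \<subseteq> aff_hull P" using aff_img[OF lg injg assms(4)] .
  have gf': "\<forall>x\<in>aff_hull P. g (f x) = x" using aff_id[OF lf lg gf] by blast
  have fg': "\<forall>y\<in>aff_hull P'. f (g y) = y" using aff_id[OF lg lf fg] by blast
  have e1: "f ` aff_hull P = aff_hull P'"
  proof
    show "aff_hull P' \<subseteq> f ` aff_hull P"
    proof
      fix y assume y: "y \<in> aff_hull P'"
      then have "g y \<in> aff_hull P" using i2 by blast
      moreover have "y = f (g y)" using fg' y by auto
      ultimately show "y \<in> f ` aff_hull P" by blast
    qed
  qed (rule i1)
  have bij: "bij_betw f (aff_hull P) (aff_hull P')"
    unfolding bij_betw_def using e1 gf' by (auto intro: inj_on_inverseI[of "aff_hull P" g f])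
  have e2: "f ` (aff_hull P \<inter> int_points A) = aff_hull P' \<inter> int_points A'"
  proof
    show "f ` (aff_hull P \<inter> int_points A) \<subseteq> aff_hull P' \<inter> int_points A'"
      using i1 fi by blast
    show "aff_hull P' \<inter> int_points A' \<subseteq> f ` (aff_hull P \<inter> int_points A)"
    proof
      fix y assume y: "y \<in> aff_hull P' \<inter> int_points A'"
      then have "g y \<in> aff_hull P \<inter> int_points A" using i2 gi by blast
      moreover have "y = f (g y)" using fg' y by auto
      ultimately show "y \<in> f ` (aff_hull P \<inter> int_points A)" by blast
    qed
  qed
  have e3: "f ` P = P'"
  proof
    show "P' \<subseteq> f ` P"
    proof
      fix y assume y: "y \<in> P'"
      then have "g y \<in> P" using assms(4) by blast
      moreover have "y = f (g y)" using fg y by auto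
      ultimately show "y \<in> f ` P" by blast
    qed
  qed (rule assms(3))
  show ?thesis unfolding int_aff_equiv_def
  proof (intro exI[of _ f] conjI ballI allI)
    fix x y c show "f (\<lambda>i. (1 - c) * x i + c * y i) = (\<lambda>i. (1 - c) * f x i + c * f y i)"
      by (rule lin2[OF lf])
  qed (use bij e2 e3 in \<open>simp_all\<close>)
qed


lemma sum_rm:
  fixes x :: "'a \<Rightarrow> real"
  assumes "finite A" "x a = 0"
  shows "(\<Sum>a'\<in>{a'\<in>A. a' \<noteq> a \<and> Q a'}. x a') = (\<Sum>a'\<in>{a'\<in>A. Q a'}. x a')"
proof -
  have "{a'\<in>A. a' \<noteq> a \<and> Q a'} = {a'\<in>A. Q a'} - {a}" by blast
  moreover have "sum x ({a'\<in>A. Q a'} - {a}) = (if a \<in> {a'\<in>A. Q a'} then sum x {a'\<in>A. Q a'} - x a else sum x {a'\<in>A. Q a'})"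
    by (rule sum_diff1) (use assms(1) in simp)
  ultimately show ?thesis using assms(2) by simp
qed

lemma lin_upd0: "lin (\<lambda>x. x(a := 0))"
  unfolding lin_def by (auto simp: fun_eq_iff)

lemma removable_if_zero:
  assumes fin: "finite A" and aA: "a \<in> A" and z: "\<forall>x\<in>flow_polytope V A s t \<theta>. x a = 0"
  shows "removable V A s t \<theta> a"
  unfolding removable_def
proof (rule equiv_lemma[where f="\<lambda>x. x(a := 0)" and g="\<lambda>x. x(a := 0)"])
  show "lin (\<lambda>x. x(a := 0))" by (rule lin_upd0)
  show "lin (\<lambda>x. x(a := 0))" by (rule lin_upd0)
  show "(\<lambda>x. x(a := 0)) ` flow_polytope V A s t \<theta> \<subseteq> flow_polytope V (A - {a}) s t \<theta>"
  proof
    fix y assume "y \<in> (\<lambda>x. x(a := 0)) ` flow_polytope V A s t \<theta>"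
    then obtain x where x: "x \<in> flow_polytope V A s t \<theta>" "y = x(a := 0)" by blast
    have xa: "x a = 0" using z x by blast
    then have yx: "y = x" using x by auto
    show "y \<in> flow_polytope V (A - {a}) s t \<theta>"
      using x(1) xa unfolding yx flow_polytope_def by (auto simp: sum_rm[where x=x and a=a, OF fin xa])
  qed
  show "(\<lambda>x. x(a := 0)) ` flow_polytope V (A - {a}) s t \<theta> \<subseteq> flow_polytope V A s t \<theta>"
  proof
    fix y assume "y \<in> (\<lambda>x. x(a := 0)) ` flow_polytope V (A - {a}) s t \<theta>"
    then obtain x where x: "x \<in> flow_polytope V (A - {a}) s t \<theta>" "y = x(a := 0)" by blast
    have xa: "x a = 0" using x(1) unfolding flow_polytope_def by blast
    then have yx: "y = x" using x by auto
    show "y \<in> flow_polytope V A s t \<theta>"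
      using x(1) xa unfolding yx flow_polytope_def
      by (auto simp: sum_rm[where x=x and a=a, OF fin xa])
  qed
  show "\<forall>x\<in>flow_polytope V A s t \<theta>. (x(a := 0))(a := 0) = x"
    using z by auto
  show "\<forall>x\<in>flow_polytope V (A - {a}) s t \<theta>. (x(a := 0))(a := 0) = x"
    unfolding flow_polytope_def by auto
  show "\<forall>x. x \<in> int_points A \<longrightarrow> x(a := 0) \<in> int_points (A - {a})"
    unfolding int_points_def by auto
  show "\<forall>x. x \<in> int_points (A - {a}) \<longrightarrow> x(a := 0) \<in> int_points A"
    unfolding int_points_def by auto
qed

lemma flow_swap0: "flow_polytope V A t s (\<lambda>_. 0) = flow_polytope V A s t (\<lambda>_. 0)"
  unfolding flow_polytope_def by auto

lemma zero_out:
  assumes fin: "finite A" and loops: "\<forall>a'\<in>A. s a' = v \<longrightarrow> t a' = v"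
    and aA: "a \<in> A" "t a = v" "s a \<noteq> v" and vV: "v \<in> V"
    and x: "x \<in> flow_polytope V A s t (\<lambda>_. 0)"
  shows "x a = 0"
proof -
  let ?T = "{a\<in>A. t a = v}" and ?S = "{a\<in>A. s a = v}"
  have c: "0 = (\<Sum>a\<in>?T. x a) - (\<Sum>a\<in>?S. x a)" and nn: "\<forall>a\<in>A. x a \<ge> 0"
    using x vV unfolding flow_polytope_def by auto
  have sub: "?S \<subseteq> ?T" using loops by blast
  have fT: "finite ?T" using fin by simp
  have "(\<Sum>a\<in>?T. x a) = (\<Sum>a\<in>?T - ?S. x a) + (\<Sum>a\<in>?S. x a)"
    using sum.subset_diff[OF sub fT] .
  then have z: "(\<Sum>a\<in>?T - ?S. x a) = 0" using c by linarith
  have "\<forall>a'\<in>?T - ?S. x a' = 0"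
    using sum_nonneg_eq_0_iff[of "?T - ?S" x] z nn fT by auto
  then show ?thesis using aA by auto
qed

lemma zero_in:
  assumes fin: "finite A" and loops: "\<forall>a'\<in>A. t a' = v \<longrightarrow> s a' = v"
    and aA: "a \<in> A" "s a = v" "t a \<noteq> v" and vV: "v \<in> V"
    and x: "x \<in> flow_polytope V A s t (\<lambda>_. 0)"
  shows "x a = 0"
  using zero_out[of A t v s a V x] assms flow_swap0 by metis


definition insum :: "'a set \<Rightarrow> 'a \<Rightarrow> ('a \<Rightarrow> 'v) \<Rightarrow> 'v \<Rightarrow> ('a \<Rightarrow> real) \<Rightarrow> real" where
  "insum A b r u y = (\<Sum>a\<in>{a\<in>A. a \<noteq> b \<and> r a = u}. y a)"

lemma sum_split:
  assumes "finite A" "b \<in> A"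
  shows "(\<Sum>a\<in>{a\<in>A. r a = u}. x a) = insum A b r u x + (if r b = u then x b else 0)"
proof (cases "r b = u")
  case True
  have "{a\<in>A. r a = u} = insert b {a\<in>A. a \<noteq> b \<and> r a = u}" using True assms by blast
  then show ?thesis using True assms(1) by (simp add: insum_def add.commute)
next
  case False
  have "{a\<in>A. r a = u} = {a\<in>A. a \<noteq> b \<and> r a = u}" using False by blast
  then show ?thesis using False by (simp add: insum_def)
qed

lemma insum_upd: "insum A b r u (y(b := c)) = insum A b r u y"
  unfolding insum_def by (rule sum.cong) auto

lemma insum_lin: "insum A b r u (\<lambda>i. \<Sum>y\<in>F. w y * h y i) = (\<Sum>y\<in>F. w y * insum A b r u (h y))"
  unfolding insum_def by (simp add: sum_distrib_left sum.swap[of _ F])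

lemma insum_nonneg: "\<forall>a\<in>A - {b}. 0 \<le> y a \<Longrightarrow> insum A b r u y \<ge> 0"
  unfolding insum_def by (rule sum_nonneg) auto

lemma glue_p:
  assumes "s b \<noteq> t b" "finite A"
  shows "(\<Sum>a\<in>{a\<in>A-{b}. glue s t b (r a) = s b}. y a) = insum A b r (s b) y + insum A b r (t b) y"
proof -
  have "{a\<in>A-{b}. glue s t b (r a) = s b} = {a\<in>A. a \<noteq> b \<and> r a = s b} \<union> {a\<in>A. a \<noteq> b \<and> r a = t b}"
    unfolding glue_def by auto
  moreover have "{a\<in>A. a \<noteq> b \<and> r a = s b} \<inter> {a\<in>A. a \<noteq> b \<and> r a = t b} = {}" using assms by auto
  ultimately show ?thesis unfolding insum_def using assms(2)
    by (simp add: sum.union_disjoint)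
qed

lemma glue_o:
  assumes "u \<noteq> s b" "u \<noteq> t b"
  shows "(\<Sum>a\<in>{a\<in>A-{b}. glue s t b (r a) = u}. y a) = insum A b r u y"
proof -
  have "{a\<in>A-{b}. glue s t b (r a) = u} = {a\<in>A. a \<noteq> b \<and> r a = u}"
    using assms unfolding glue_def by auto
  then show ?thesis unfolding insum_def by simp
qed

lemma P_iff:
  assumes fin: "finite A" and bA: "b \<in> A" and nl: "s b \<noteq> t b" and pV: "s b \<in> V" and qV: "t b \<in> V"
  shows "x \<in> flow_polytope V A s t (\<lambda>_. 0) \<longleftrightarrow>
    (\<forall>a. a \<notin> A \<longrightarrow> x a = 0) \<and> (\<forall>a\<in>A. 0 \<le> x a) \<and>
    insum A b t (s b) x - insum A b s (s b) x - x b = 0 \<and>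
    insum A b t (t b) x + x b - insum A b s (t b) x = 0 \<and>
    (\<forall>u\<in>V - {s b, t b}. insum A b t u x - insum A b s u x = 0)"
proof -
  define E where "E v = (\<Sum>a\<in>{a\<in>A. t a = v}. x a) - (\<Sum>a\<in>{a\<in>A. s a = v}. x a)" for v
  have Ep: "E (s b) = insum A b t (s b) x - insum A b s (s b) x - x b"
    unfolding E_def using sum_split[OF fin bA, where r=t and u="s b" and x=x] sum_split[OF fin bA, where r=s and u="s b" and x=x] nl by simp
  have Eq: "E (t b) = insum A b t (t b) x + x b - insum A b s (t b) x"
    unfolding E_def using sum_split[OF fin bA, where r=t and u="t b" and x=x] sum_split[OF fin bA, where r=s and u="t b" and x=x] nl by simp
  have Eo: "E u = insum A b t u x - insum A b s u x" if "u \<noteq> s b" "u \<noteq> t b" for u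
    unfolding E_def using sum_split[OF fin bA, where r=t and u=u and x=x] sum_split[OF fin bA, where r=s and u=u and x=x] that by simp
  have m: "x \<in> flow_polytope V A s t (\<lambda>_. 0) \<longleftrightarrow>
    (\<forall>a. a \<notin> A \<longrightarrow> x a = 0) \<and> (\<forall>a\<in>A. 0 \<le> x a) \<and> (\<forall>v\<in>V. E v = 0)"
    unfolding flow_polytope_def E_def by auto
  have "(\<forall>v\<in>V. E v = 0) \<longleftrightarrow> E (s b) = 0 \<and> E (t b) = 0 \<and> (\<forall>u\<in>V - {s b, t b}. E u = 0)"
    using pV qV by auto
  also have "\<dots> \<longleftrightarrow> insum A b t (s b) x - insum A b s (s b) x - x b = 0 \<and>
    insum A b t (t b) x + x b - insum A b s (t b) x = 0 \<and>
    (\<forall>u\<in>V - {s b, t b}. insum A b t u x - insum A b s u x = 0)"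
    using Ep Eq Eo by auto
  finally show ?thesis using m by blast
qed

lemma P'_iff:
  assumes fin: "finite A" and bA: "b \<in> A" and nl: "s b \<noteq> t b" and pV: "s b \<in> V" and qV: "t b \<in> V"
  shows "y \<in> flow_polytope (V - {t b}) (A - {b}) (glue s t b \<circ> s) (glue s t b \<circ> t) (contract_theta s t (\<lambda>_. 0) b) \<longleftrightarrow>
    (\<forall>a. a \<notin> A - {b} \<longrightarrow> y a = 0) \<and> (\<forall>a\<in>A - {b}. 0 \<le> y a) \<and>
    insum A b t (s b) y + insum A b t (t b) y - insum A b s (s b) y - insum A b s (t b) y = 0 \<and>
    (\<forall>u\<in>V - {s b, t b}. insum A b t u y - insum A b s u y = 0)"
proof -
  define E where "E v = (\<Sum>a\<in>{a\<in>A-{b}. (glue s t b \<circ> t) a = v}. y a) - (\<Sum>a\<in>{a\<in>A-{b}. (glue s t b \<circ> s) a = v}. y a)" for v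
  have Ep: "E (s b) = insum A b t (s b) y + insum A b t (t b) y - insum A b s (s b) y - insum A b s (t b) y"
    unfolding E_def o_def using glue_p[where r=t and y=y and s=s and t=t and b=b and A=A, OF nl fin] glue_p[where r=s and y=y and s=s and t=t and b=b and A=A, OF nl fin] by simp
  have Eo: "E u = insum A b t u y - insum A b s u y" if "u \<noteq> s b" "u \<noteq> t b" for u
    unfolding E_def o_def using glue_o[where A=A and r=t and y=y and s=s and t=t and b=b and u=u, OF that] glue_o[where A=A and r=s and y=y and s=s and t=t and b=b and u=u, OF that] by simp
  have ct: "contract_theta s t (\<lambda>_. 0) b = (\<lambda>_. 0)" by (auto simp: contract_theta_def fun_eq_iff)
  have m: "y \<in> flow_polytope (V - {t b}) (A - {b}) (glue s t b \<circ> s) (glue s t b \<circ> t) (contract_theta s t (\<lambda>_. 0) b) \<longleftrightarrow>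
    (\<forall>a. a \<notin> A - {b} \<longrightarrow> y a = 0) \<and> (\<forall>a\<in>A - {b}. 0 \<le> y a) \<and> (\<forall>v\<in>V - {t b}. E v = 0)"
    unfolding flow_polytope_def ct E_def by (simp only: of_int_0) auto
  have "(\<forall>v\<in>V - {t b}. E v = 0) \<longleftrightarrow> E (s b) = 0 \<and> (\<forall>u\<in>V - {s b, t b}. E u = 0)"
    using pV nl by auto
  also have "\<dots> \<longleftrightarrow> insum A b t (s b) y + insum A b t (t b) y - insum A b s (s b) y - insum A b s (t b) y = 0 \<and>
    (\<forall>u\<in>V - {s b, t b}. insum A b t u y - insum A b s u y = 0)"
    using Ep Eo by auto
  finally show ?thesis using m by blast
qed


lemma insum_Ints: "\<forall>a\<in>A - {b}. y a \<in> \<int> \<Longrightarrow> insum A b r u y \<in> \<int>"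
  unfolding insum_def by (rule Ints_sum) auto

lemma contract_if:
  assumes fin: "finite A" and bA: "b \<in> A" and nl: "s b \<noteq> t b" and pV: "s b \<in> V" and qV: "t b \<in> V"
    and nn: "\<forall>y. (\<forall>a\<in>A - {b}. 0 \<le> y a) \<longrightarrow>
       insum A b t (s b) y + insum A b t (t b) y - insum A b s (s b) y - insum A b s (t b) y = 0 \<longrightarrow>
       insum A b t (s b) y - insum A b s (s b) y \<ge> 0"
  shows "contractable V A s t (\<lambda>_. 0) b"
  unfolding contractable_def
proof (intro conjI nl equiv_lemma[where f="\<lambda>x. x(b := 0)" and g="\<lambda>y. y(b := insum A b t (s b) y - insum A b s (s b) y)"])
  note Pi = P_iff[where A=A and b=b and s=s and t=t and V=V, OF fin bA nl pV qV]
    and P'i = P'_iff[where A=A and b=b and s=s and t=t and V=V, OF fin bA nl pV qV]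
  show "lin (\<lambda>x. x(b := 0))" by (rule lin_upd0)
  show "lin (\<lambda>y. y(b := insum A b t (s b) y - insum A b s (s b) y))"
    unfolding lin_def by (auto simp: fun_eq_iff insum_lin right_diff_distrib sum_subtractf)
  show "(\<lambda>x. x(b := 0)) ` flow_polytope V A s t (\<lambda>_. 0)
    \<subseteq> flow_polytope (V - {t b}) (A - {b}) (glue s t b \<circ> s) (glue s t b \<circ> t) (contract_theta s t (\<lambda>_. 0) b)"
  proof
    fix z assume "z \<in> (\<lambda>x. x(b := 0)) ` flow_polytope V A s t (\<lambda>_. 0)"
    then obtain x where x: "x \<in> flow_polytope V A s t (\<lambda>_. 0)" "z = x(b := 0)" by blast
    show "z \<in> flow_polytope (V - {t b}) (A - {b}) (glue s t b \<circ> s) (glue s t b \<circ> t) (contract_theta s t (\<lambda>_. 0) b)"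
      using x(1) unfolding Pi P'i x(2) by (auto simp: insum_upd)
  qed
  show "(\<lambda>y. y(b := insum A b t (s b) y - insum A b s (s b) y)) `
      flow_polytope (V - {t b}) (A - {b}) (glue s t b \<circ> s) (glue s t b \<circ> t) (contract_theta s t (\<lambda>_. 0) b)
    \<subseteq> flow_polytope V A s t (\<lambda>_. 0)"
  proof
    fix z assume "z \<in> (\<lambda>y. y(b := insum A b t (s b) y - insum A b s (s b) y)) `
      flow_polytope (V - {t b}) (A - {b}) (glue s t b \<circ> s) (glue s t b \<circ> t) (contract_theta s t (\<lambda>_. 0) b)"
    then obtain y where y: "y \<in> flow_polytope (V - {t b}) (A - {b}) (glue s t b \<circ> s) (glue s t b \<circ> t) (contract_theta s t (\<lambda>_. 0) b)"
      "z = y(b := insum A b t (s b) y - insum A b s (s b) y)" by blast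
    have yc: "(\<forall>a. a \<notin> A - {b} \<longrightarrow> y a = 0) \<and> (\<forall>a\<in>A - {b}. 0 \<le> y a) \<and>
    insum A b t (s b) y + insum A b t (t b) y - insum A b s (s b) y - insum A b s (t b) y = 0 \<and>
    (\<forall>u\<in>V - {s b, t b}. insum A b t u y - insum A b s u y = 0)" using y(1) P'i by blast
    have c: "insum A b t (s b) y - insum A b s (s b) y \<ge> 0" using nn yc by blast
    show "z \<in> flow_polytope V A s t (\<lambda>_. 0)"
      unfolding Pi y(2) using yc c bA by (auto simp: insum_upd)
  qed
  show "\<forall>x\<in>flow_polytope V A s t (\<lambda>_. 0).
      (x(b := 0))(b := insum A b t (s b) (x(b := 0)) - insum A b s (s b) (x(b := 0))) = x"
  proof
    fix x assume "x \<in> flow_polytope V A s t (\<lambda>_. 0)"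
    then have "insum A b t (s b) x - insum A b s (s b) x - x b = 0" using Pi[where x=x] by blast
    then show "(x(b := 0))(b := insum A b t (s b) (x(b := 0)) - insum A b s (s b) (x(b := 0))) = x"
      by (auto simp: insum_upd fun_eq_iff)
  qed
  show "\<forall>y\<in>flow_polytope (V - {t b}) (A - {b}) (glue s t b \<circ> s) (glue s t b \<circ> t) (contract_theta s t (\<lambda>_. 0) b).
      (y(b := insum A b t (s b) y - insum A b s (s b) y))(b := 0) = y"
    unfolding flow_polytope_def by (auto simp: fun_eq_iff)
  show "\<forall>x. x \<in> int_points A \<longrightarrow> x(b := 0) \<in> int_points (A - {b})"
    unfolding int_points_def by auto
  show "\<forall>y. y \<in> int_points (A - {b}) \<longrightarrow>
      y(b := insum A b t (s b) y - insum A b s (s b) y) \<in> int_points A"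
    unfolding int_points_def by (auto intro!: Ints_diff insum_Ints)
qed


lemma insum_empty: "\<forall>a\<in>A. r a = u \<longrightarrow> a = b \<Longrightarrow> insum A b r u y = 0"
proof -
  assume h: "\<forall>a\<in>A. r a = u \<longrightarrow> a = b"
  have "{a\<in>A. a \<noteq> b \<and> r a = u} = {}" using h by blast
  then show ?thesis unfolding insum_def by (metis sum.empty)
qed

lemma contract_out:
  assumes fin: "finite A" and bA: "b \<in> A" and nl: "s b \<noteq> t b" and pV: "s b \<in> V" and qV: "t b \<in> V"
    and u: "\<forall>a\<in>A. s a = s b \<longrightarrow> a = b"
  shows "contractable V A s t (\<lambda>_. 0) b"
proof (rule contract_if[where A=A and b=b and s=s and t=t and V=V, OF fin bA nl pV qV], intro allI impI)
  fix y :: "'a \<Rightarrow> real" assume "\<forall>a\<in>A - {b}. 0 \<le> y a"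
  then have "insum A b t (s b) y \<ge> 0" by (rule insum_nonneg)
  moreover have "insum A b s (s b) y = 0" using u by (rule insum_empty)
  ultimately show "insum A b t (s b) y - insum A b s (s b) y \<ge> 0" by simp
qed

lemma contract_in:
  assumes fin: "finite A" and bA: "b \<in> A" and nl: "s b \<noteq> t b" and pV: "s b \<in> V" and qV: "t b \<in> V"
    and u: "\<forall>a\<in>A. t a = t b \<longrightarrow> a = b"
  shows "contractable V A s t (\<lambda>_. 0) b"
proof (rule contract_if[where A=A and b=b and s=s and t=t and V=V, OF fin bA nl pV qV], intro allI impI)
  fix y :: "'a \<Rightarrow> real" assume nn: "\<forall>a\<in>A - {b}. 0 \<le> y a"
    and e: "insum A b t (s b) y + insum A b t (t b) y - insum A b s (s b) y - insum A b s (t b) y = 0"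
  have "insum A b s (t b) y \<ge> 0" using nn by (rule insum_nonneg)
  moreover have "insum A b t (t b) y = 0" using u by (rule insum_empty)
  ultimately show "insum A b t (s b) y - insum A b s (s b) y \<ge> 0" using e by simp
qed

lemma isolated:
  assumes "finite V" "v \<in> V" "w \<in> V" "w \<noteq> v"
    and inc: "\<forall>a\<in>A. (s a = v \<or> t a = v) \<longrightarrow> (s a = v \<and> t a = v)"
  shows "num_components V A s t \<noteq> 1"
proof -
  let ?r = "conn_rel V A s t"
  have cl: "?r``{v} = {v}"
  proof
    show "?r``{v} \<subseteq> {v}"
    proof
      fix u assume "u \<in> ?r``{v}"
      then have "(v,u) \<in> (und_edges A s t)\<^sup>*" unfolding conn_rel_def by auto
      then show "u \<in> {v}"
      proof (induction rule: rtrancl_induct)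
        case base then show ?case by simp
      next
        case (step y z) then show ?case using inc unfolding und_edges_def by auto
      qed
    qed
    show "{v} \<subseteq> ?r``{v}" using assms(2) unfolding conn_rel_def by auto
  qed
  have w: "w \<in> ?r``{w}" using assms(3) unfolding conn_rel_def by auto
  have in1: "?r``{v} \<in> V//?r" using assms(2) by (rule quotientI)
  have in2: "?r``{w} \<in> V//?r" using assms(3) by (rule quotientI)
  have ne: "?r``{v} \<noteq> ?r``{w}" using cl w assms(4) by auto
  have fin: "finite (V//?r)" by (rule finite_quotient) (use assms(1) in \<open>auto simp: conn_rel_def\<close>)
  have "card {?r``{v}, ?r``{w}} \<le> card (V//?r)" using in1 in2 fin by (intro card_mono) auto
  then have "card (V//?r) \<ge> 2" using ne by simp
  then show ?thesis unfolding num_components_def by simp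
qed


lemma single_vertex_False:
  assumes q: "quiver V A s t" and pr: "prime_quiver V A s t" and ch: "chi V A s t \<ge> 2"
    and V1: "V = {v}" and c1: "card {a\<in>A. s a = v} \<le> 1"
  shows False
proof -
  have finA: "finite A" and sV: "\<forall>a\<in>A. s a \<in> V" using q unfolding quiver_def by auto
  have "{a\<in>A. s a = v} = A" using sV V1 by auto
  then have cA: "card A \<le> 1" using c1 by simp
  have "A \<noteq> {}" and nc: "num_components V A s t = 1" using pr unfolding prime_quiver_def by auto
  then have "card A \<ge> 1" using finA by (simp add: Suc_le_eq card_gt_0_iff)
  then have "card A = 1" using cA by simp
  then have "chi V A s t = 1" using nc V1 unfolding chi_def by simp
  then show False using ch by simp
qed

lemma outdeg:
  assumes q: "quiver V A s t" and pr: "prime_quiver V A s t" and ch: "chi V A s t \<ge> 2"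
    and nr: "\<forall>a\<in>A. \<not> removable V A s t (\<lambda>_. 0) a"
    and nc: "\<forall>a\<in>A. \<not> contractable V A s t (\<lambda>_. 0) a"
    and vV: "v \<in> V"
  shows "card {a\<in>A. s a = v} \<ge> 2"
proof (rule ccontr)
  assume "\<not> ?thesis"
  then have c1: "card {a\<in>A. s a = v} \<le> 1" by simp
  have finA: "finite A" and finV: "finite V" and sV: "\<forall>a\<in>A. s a \<in> V" and tV: "\<forall>a\<in>A. t a \<in> V"
    using q unfolding quiver_def by auto
  have comp: "num_components V A s t = 1" using pr unfolding prime_quiver_def by auto
  show False
  proof (cases "\<forall>a\<in>A. s a = v \<longrightarrow> t a = v")
    case True
    show False
    proof (cases "\<exists>a\<in>A. t a = v \<and> s a \<noteq> v")
      case True2: True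
      then obtain a where a: "a \<in> A" "t a = v" "s a \<noteq> v" by blast
      have "\<forall>x\<in>flow_polytope V A s t (\<lambda>_. 0). x a = 0"
        using zero_out[where A=A and s=s and t=t and v=v and a=a and V=V, OF finA True a vV] by blast
      then have "removable V A s t (\<lambda>_. 0) a" by (rule removable_if_zero[where A=A and a=a and V=V and s=s and t=t, OF finA a(1)])
      then show False using nr a(1) by blast
    next
      case False
      then have h2: "\<forall>a\<in>A. t a = v \<longrightarrow> s a = v" by auto
      have inc: "\<forall>a\<in>A. (s a = v \<or> t a = v) \<longrightarrow> (s a = v \<and> t a = v)"
      proof (intro ballI impI)
        fix a assume "a \<in> A" "s a = v \<or> t a = v"
        then show "s a = v \<and> t a = v" using True h2 by auto
      qed
      show False
      proof (cases "\<exists>w\<in>V. w \<noteq> v")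
        case True
        then obtain w where w: "w \<in> V" "w \<noteq> v" by blast
        have "num_components V A s t \<noteq> 1" by (rule isolated[where V=V and A=A and s=s and t=t and v=v and w=w, OF finV vV w(1) w(2) inc])
        then show False using comp by simp
      next
        case False
        then have "V \<subseteq> {v}" by blast
        then have "V = {v}" using vV by blast
        then show False by (rule single_vertex_False[where V=V and A=A and s=s and t=t and v=v, OF q pr ch _ c1])
      qed
    qed
  next
    case False
    then obtain b where b: "b \<in> A" "s b = v" "t b \<noteq> v" by blast
    have "card {a\<in>A. s a = v} \<le> Suc 0" using c1 by simp
    then have "\<forall>a1\<in>{a\<in>A. s a = v}. \<forall>a2\<in>{a\<in>A. s a = v}. a1 = a2"
      using card_le_Suc0_iff_eq[of "{a\<in>A. s a = v}"] finA by simp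
    then have u: "\<forall>a\<in>A. s a = s b \<longrightarrow> a = b" using b by blast
    have nl: "s b \<noteq> t b" using b by simp
    have pV: "s b \<in> V" using sV b(1) by blast
    have qV: "t b \<in> V" using tV b(1) by blast
    have "contractable V A s t (\<lambda>_. 0) b"
      by (rule contract_out[where V=V and A=A and s=s and t=t and b=b, OF finA b(1) nl pV qV u])
    then show False using nc b(1) by blast
  qed
qed

lemma indeg:
  assumes q: "quiver V A s t" and pr: "prime_quiver V A s t" and ch: "chi V A s t \<ge> 2"
    and nr: "\<forall>a\<in>A. \<not> removable V A s t (\<lambda>_. 0) a"
    and nc: "\<forall>a\<in>A. \<not> contractable V A s t (\<lambda>_. 0) a"
    and vV: "v \<in> V"
  shows "card {a\<in>A. t a = v} \<ge> 2"
proof (rule ccontr)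
  assume "\<not> ?thesis"
  then have c1: "card {a\<in>A. t a = v} \<le> 1" by simp
  have finA: "finite A" and finV: "finite V" and sV: "\<forall>a\<in>A. s a \<in> V" and tV: "\<forall>a\<in>A. t a \<in> V"
    using q unfolding quiver_def by auto
  have comp: "num_components V A s t = 1" using pr unfolding prime_quiver_def by auto
  show False
  proof (cases "\<forall>a\<in>A. t a = v \<longrightarrow> s a = v")
    case True
    show False
    proof (cases "\<exists>a\<in>A. s a = v \<and> t a \<noteq> v")
      case True2: True
      then obtain a where a: "a \<in> A" "s a = v" "t a \<noteq> v" by blast
      have "\<forall>x\<in>flow_polytope V A s t (\<lambda>_. 0). x a = 0"
        using zero_in[where A=A and s=s and t=t and v=v and a=a and V=V, OF finA True a vV] by blast
      then have "removable V A s t (\<lambda>_. 0) a" by (rule removable_if_zero[where A=A and a=a and V=V and s=s and t=t, OF finA a(1)])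
      then show False using nr a(1) by blast
    next
      case False
      then have h2: "\<forall>a\<in>A. s a = v \<longrightarrow> t a = v" by auto
      have inc: "\<forall>a\<in>A. (s a = v \<or> t a = v) \<longrightarrow> (s a = v \<and> t a = v)"
      proof (intro ballI impI)
        fix a assume "a \<in> A" "s a = v \<or> t a = v"
        then show "s a = v \<and> t a = v" using True h2 by auto
      qed
      show False
      proof (cases "\<exists>w\<in>V. w \<noteq> v")
        case True
        then obtain w where w: "w \<in> V" "w \<noteq> v" by blast
        have "num_components V A s t \<noteq> 1" by (rule isolated[where V=V and A=A and s=s and t=t and v=v and w=w, OF finV vV w(1) w(2) inc])
        then show False using comp by simp
      next
        case False
        then have "V \<subseteq> {v}" by blast
        then have V1: "V = {v}" using vV by blast
        then have "{a\<in>A. s a = v} = {a\<in>A. t a = v}" using sV tV by auto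
        then show False using single_vertex_False[where V=V and A=A and s=s and t=t and v=v, OF q pr ch V1] c1 by simp
      qed
    qed
  next
    case False
    then obtain b where b: "b \<in> A" "t b = v" "s b \<noteq> v" by blast
    have "card {a\<in>A. t a = v} \<le> Suc 0" using c1 by simp
    then have "\<forall>a1\<in>{a\<in>A. t a = v}. \<forall>a2\<in>{a\<in>A. t a = v}. a1 = a2"
      using card_le_Suc0_iff_eq[of "{a\<in>A. t a = v}"] finA by simp
    then have u: "\<forall>a\<in>A. t a = t b \<longrightarrow> a = b" using b by blast
    have nl: "s b \<noteq> t b" using b by simp
    have pV: "s b \<in> V" using sV b(1) by blast
    have qV: "t b \<in> V" using tV b(1) by blast
    have "contractable V A s t (\<lambda>_. 0) b"
      by (rule contract_in[where V=V and A=A and s=s and t=t and b=b, OF finA b(1) nl pV qV u])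
    then show False using nc b(1) by blast
  qed
qed

theorem proposition7p1:
  fixes V :: "'v set" and A :: "'a set" and s t :: "'a \<Rightarrow> 'v"
  assumes "quiver V A s t"
    and "prime_quiver V A s t"
    and "chi V A s t \<ge> 2"
    and "tight V A s t (\<lambda>_. 0)"
  shows "(\<forall>v\<in>V. card {a\<in>A. s a = v} \<ge> 2 \<and> card {a\<in>A. t a = v} \<ge> 2)
       \<and> int (card V) \<le> chi V A s t - 1
       \<and> int (card A) = int (card V) + chi V A s t - 1
       \<and> int (card A) \<le> 2 * (chi V A s t - 1)"
proof -
  have nr: "\<forall>a\<in>A. \<not> removable V A s t (\<lambda>_. 0) a" and nc: "\<forall>a\<in>A. \<not> contractable V A s t (\<lambda>_. 0) a"
    using assms(4) unfolding tight_def by auto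
  have deg: "\<forall>v\<in>V. card {a\<in>A. s a = v} \<ge> 2 \<and> card {a\<in>A. t a = v} \<ge> 2"
    using outdeg[OF assms(1-3) nr nc] indeg[OF assms(1-3) nr nc] by blast
  have finA: "finite A" and finV: "finite V" and sV: "s ` A \<subseteq> V"
    using assms(1) unfolding quiver_def by auto
  have comp: "num_components V A s t = 1" using assms(2) unfolding prime_quiver_def by auto
  have chi: "chi V A s t = int (card A) - int (card V) + 1" using comp unfolding chi_def by simp
  have "(\<Sum>v\<in>V. card {a\<in>A. s a = v}) = (\<Sum>v\<in>V. (\<Sum>a\<in>{a\<in>A. s a = v}. (1::nat)))" by simp
  also have "\<dots> = (\<Sum>a\<in>A. (1::nat))" by (rule sum.group[OF finA finV sV])
  finally have cs: "(\<Sum>v\<in>V. card {a\<in>A. s a = v}) = card A" by simp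
  have "(\<Sum>v\<in>V. (2::nat)) \<le> (\<Sum>v\<in>V. card {a\<in>A. s a = v})" using deg by (intro sum_mono) auto
  then have "2 * card V \<le> card A" using cs by simp
  then have h2: "2 * int (card V) \<le> int (card A)" by linarith
  have a1: "int (card V) \<le> chi V A s t - 1" using chi h2 by linarith
  have a2: "int (card A) = int (card V) + chi V A s t - 1" using chi by linarith
  have a3: "int (card A) \<le> 2 * (chi V A s t - 1)" using chi h2 by simp
  show ?thesis by (intro conjI deg a1 a2 a3)
qed

end
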